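(* For integers $n\geq 3$ and $m\geq 2$, the windmill graph $W_n^m$ satisfies $\eta(W_n^m)=n-1$.
   Context: All graphs are finite, simple and undirected. The windmill graph $W_n^m$ consists of $m$ copies of the complete graph $K_n$ sharing a single common vertex; equivalently it is the join of $m$ disjoint copies of $K_{n-1}$ with a single vertex $K_1$. For a vertex $v$, $N(v)$ is its set of neighbours. For a positive integer $k$, $[k]=\{1,\dots,k\}$. For a labeling $f:V(G)\to[k]$ and $S\subseteq V(G)$, $f(S)=\sum_{u\in S}f(u)$. A labeling $f:V(G)\to[k]$ is an additive $k$-coloring if $f(N(u))\neq f(N(v))$ for every edge $(u,v)$ of $G$. The additive chromatic number $\eta(G)$ is the least $k$ for which $G$ has an additive $k$-coloring. *)

theory Defs
  imports Main
begin

text \<open>A finite simple graph is given by a vertex set V and a symmetric irreflexive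
  edge relation E (only its restriction to V matters).\<close>

definition nbhd :: "'a set \<Rightarrow> ('a \<Rightarrow> 'a \<Rightarrow> bool) \<Rightarrow> 'a \<Rightarrow> 'a set" where
  "nbhd V E u = {v \<in> V. E u v}"

definition additive_coloring ::
  "'a set \<Rightarrow> ('a \<Rightarrow> 'a \<Rightarrow> bool) \<Rightarrow> nat \<Rightarrow> ('a \<Rightarrow> nat) \<Rightarrow> bool" where
  "additive_coloring V E k f \<longleftrightarrow>
     (\<forall>v\<in>V. f v \<in> {1..k}) \<and>
     (\<forall>u\<in>V. \<forall>v\<in>V. E u v \<longrightarrow> (\<Sum>w\<in>nbhd V E u. f w) \<noteq> (\<Sum>w\<in>nbhd V E v. f w))"

definition additive_chromatic_number :: "'a set \<Rightarrow> ('a \<Rightarrow> 'a \<Rightarrow> bool) \<Rightarrow> nat" where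
  "additive_chromatic_number V E = (LEAST k. k \<ge> 1 \<and> (\<exists>f. additive_coloring V E k f))"

text \<open>Windmill graph W_n^m: centre (0,0); blade i (1 \<le> i \<le> m) has vertices (i,j), 1 \<le> j \<le> n-1.
  Centre adjacent to everything, blade vertices adjacent iff in the same blade.\<close>

definition windmill_vertices :: "nat \<Rightarrow> nat \<Rightarrow> (nat \<times> nat) set" where
  "windmill_vertices n m = {(0,0)} \<union> ({1..m} \<times> {1..n-1})"

definition windmill_edge :: "nat \<times> nat \<Rightarrow> nat \<times> nat \<Rightarrow> bool" where
  "windmill_edge p q \<longleftrightarrow> p \<noteq> q \<and> (fst p = 0 \<or> fst q = 0 \<or> fst p = fst q)"

end

theory Submission
  imports Defs
begin

lemma closed_sum:
  assumes "finite C" "u \<in> C" "N = C - {u}"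
  shows "(\<Sum>w\<in>C. f w) = f u + (\<Sum>w\<in>N. (f w::nat))"
  using assms by (simp add: sum.remove)

lemma nb_blade:
  assumes "i \<in> {1..m}" "j \<in> {1..n-1}"
  shows "nbhd (windmill_vertices n m) windmill_edge (i,j)
     = insert (0,0) ({i} \<times> {1..n-1}) - {(i,j)}"
  using assms by (auto simp: nbhd_def windmill_vertices_def windmill_edge_def)

lemma nb_center:
  shows "nbhd (windmill_vertices n m) windmill_edge (0,0) = {1..m} \<times> {1..n-1}"
  by (auto simp: nbhd_def windmill_vertices_def windmill_edge_def)

lemma lower:
  assumes n: "n \<ge> 3" and m: "m \<ge> 2"
    and col: "additive_coloring (windmill_vertices n m) windmill_edge k f"
  shows "n - 1 \<le> k"
proof -
  let ?V = "windmill_vertices n m"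
  let ?C = "insert (0,0) ({1::nat} \<times> {1..n-1})"
  have inj: "inj_on (\<lambda>j. f (1,j)) {1..n-1}"
  proof (rule inj_onI)
    fix j j' assume j: "j \<in> {1..n-1}" and j': "j' \<in> {1..n-1}" and eq: "f (1,j) = f (1,j')"
    show "j = j'"
    proof (rule ccontr)
      assume ne: "j \<noteq> j'"
      have v: "(1,j) \<in> ?V" "(1,j') \<in> ?V" using j j' m by (auto simp: windmill_vertices_def)
      have e: "windmill_edge (1,j) (1,j')" using ne by (simp add: windmill_edge_def)
      have 1: "(\<Sum>w\<in>?C. f w) = f (1,j) + (\<Sum>w\<in>nbhd ?V windmill_edge (1,j). f w)"
        apply (rule closed_sum) using j m by (auto simp: nb_blade)
      have 2: "(\<Sum>w\<in>?C. f w) = f (1,j') + (\<Sum>w\<in>nbhd ?V windmill_edge (1,j'). f w)"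
        apply (rule closed_sum) using j' m by (auto simp: nb_blade)
      from col v e have "(\<Sum>w\<in>nbhd ?V windmill_edge (1,j). f w) \<noteq> (\<Sum>w\<in>nbhd ?V windmill_edge (1,j'). f w)"
        unfolding additive_coloring_def by blast
      with 1 2 eq show False by simp
    qed
  qed
  have sub: "(\<lambda>j. f (1,j)) ` {1..n-1} \<subseteq> {1..k}"
    using col m unfolding additive_coloring_def windmill_vertices_def by auto
  have "card {1..n-1} \<le> card {1..k}"
    using card_inj_on_le[OF inj sub] by simp
  then show ?thesis by simp
qed

definition g :: "nat \<times> nat \<Rightarrow> nat" where
  "g p = (if fst p = 0 then 1 else snd p)"

lemma upper:
  assumes n: "n \<ge> 3" and m: "m \<ge> 2"
  shows "additive_coloring (windmill_vertices n m) windmill_edge (n-1) g"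
proof -
  let ?V = "windmill_vertices n m"
  define s where "s = (\<Sum>j\<in>{1..n-1}. j)"
  have s1: "s \<ge> n - 1" unfolding s_def
    using member_le_sum[of "n-1" "{1..n-1}" "\<lambda>j. j"] n by simp
  have cs: "(\<Sum>w\<in>nbhd ?V windmill_edge (0,0). g w) = m * s"
  proof -
    have "(\<Sum>w\<in>{1..m} \<times> {1..n-1}. g w) = (\<Sum>i\<in>{1..m}. \<Sum>j\<in>{1..n-1}. g (i,j))"
        using sum.cartesian_product[of "\<lambda>i j. g (i,j)" "{1..n-1}" "{1..m}"] by (simp add: split_def)
    also have "\<dots> = (\<Sum>i\<in>{1..m}. s)" unfolding s_def g_def by (intro sum.cong) auto
    finally show ?thesis by (simp add: nb_center)
  qed
  have bs: "(\<Sum>w\<in>nbhd ?V windmill_edge (i,j). g w) + j = 1 + s"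
    if "i \<in> {1..m}" "j \<in> {1..n-1}" for i j
  proof -
    have "(\<Sum>w\<in>insert (0,0) ({i} \<times> {1..n-1}). g w) = g (i,j) + (\<Sum>w\<in>nbhd ?V windmill_edge (i,j). g w)"
      apply (rule closed_sum) using that by (auto simp: nb_blade)
    moreover have "(\<Sum>w\<in>insert (0,0) ({i} \<times> {1..n-1}). g w) = 1 + s"
    proof -
      have "(\<Sum>w\<in>insert (0,0) ({i} \<times> {1..n-1}). g w) = g (0,0) + (\<Sum>w\<in>{i} \<times> {1..n-1}. g w)"
        using that by (subst sum.insert) auto
      also have "(\<Sum>w\<in>{i} \<times> {1..n-1}. g w) = (\<Sum>j\<in>{1..n-1}. g (i,j))"
        using sum.cartesian_product[of "\<lambda>i j. g (i,j)" "{1..n-1}" "{i}"] by (simp add: split_def)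
      also have "\<dots> = s" unfolding s_def g_def using that by (intro sum.cong) auto
      finally show ?thesis by (simp add: g_def)
    qed
    ultimately show ?thesis using that by (simp add: g_def)
  qed
  show ?thesis
    unfolding additive_coloring_def
  proof (intro conjI ballI impI)
    fix v assume "v \<in> ?V" then show "g v \<in> {1..n-1}"
      using n by (auto simp: windmill_vertices_def g_def)
  next
    fix u v assume u: "u \<in> ?V" and v: "v \<in> ?V" and e: "windmill_edge u v"
    have ms: "m * s \<ge> 2 * s" using m by simp
    have key: "(\<Sum>w\<in>nbhd ?V windmill_edge (i,j). g w) \<noteq> m * s"
      if "i \<in> {1..m}" "j \<in> {1..n-1}" for i j
    proof assume "(\<Sum>w\<in>nbhd ?V windmill_edge (i,j). g w) = m * s" with bs[OF that] that ms s1 n show False by linarith qed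
    show "(\<Sum>w\<in>nbhd ?V windmill_edge u. g w) \<noteq> (\<Sum>w\<in>nbhd ?V windmill_edge v. g w)"
    proof (cases "u = (0,0)")
      case True
      then obtain i j where "v = (i,j)" "i \<in> {1..m}" "j \<in> {1..n-1}"
        using v e by (auto simp: windmill_vertices_def windmill_edge_def)
      then show ?thesis using True cs key by metis
    next
      case False
      then obtain i j where uij: "u = (i,j)" "i \<in> {1..m}" "j \<in> {1..n-1}"
        using u by (auto simp: windmill_vertices_def)
      show ?thesis
      proof (cases "v = (0,0)")
        case True
        then show ?thesis using uij cs key by metis
      next
        case False
        then obtain i' j' where vij: "v = (i',j')" "i' \<in> {1..m}" "j' \<in> {1..n-1}"
          using v by (auto simp: windmill_vertices_def)
        have "i = i'" "j \<noteq> j'" using e uij vij by (auto simp: windmill_edge_def)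
        then show ?thesis using bs[OF uij(2,3)] bs[OF vij(2,3)] uij vij by auto
      qed
    qed
  qed
qed

theorem mainTheorem7:
  fixes n m :: nat
  assumes "n \<ge> 3" and "m \<ge> 2"
  shows "additive_chromatic_number (windmill_vertices n m) windmill_edge = n - 1"
  unfolding additive_chromatic_number_def
proof (rule Least_equality)
  show "1 \<le> n - 1 \<and> (\<exists>f. additive_coloring (windmill_vertices n m) windmill_edge (n - 1) f)"
    using assms upper by auto
next
  fix k assume "1 \<le> k \<and> (\<exists>f. additive_coloring (windmill_vertices n m) windmill_edge k f)"
  then show "n - 1 \<le> k" using lower assms by blast
qed

end
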